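(* Let $G=(V,E)$ be a $k$-uniform linear hypergraph with a vertex correspondence $\sigma$ and weighted lists of colours $(L,\mu)$ assigned to its vertices, where each list is finite. Let $\ell,n>0$ be such that (i) $\ell/n\ge 3e$ ($e$ Euler's number); (ii) $|L(v)|_\mu\ge\ell$ for all $v\in V$; (iii) $|N_{G,L,\sigma}(v,c)|_\mu\le n$ for all $v\in V$ and $c\in L(v)$. Then $G$ has an $(L,\sigma)$-colouring.
   Context: A hypergraph is $k$-uniform if every edge has exactly $k$ vertices, and linear if two distinct edges share at most one vertex; two distinct vertices are adjacent if they lie in a common edge. Colours are positive integers. A vertex correspondence $\sigma$ consists of permutations $\sigma_{u,v}$ of $\mathbb{N}$ for all ordered pairs of adjacent vertices $u,v$, with $\sigma_{v,u}=\sigma_{u,v}^{-1}$; $(u,c)$ blocks $(v,c')$ if $\sigma_{u,v}(c)=c'$. A weighted list assignment $(L,\mu)$ gives each vertex $v$ a list $L(v)\subseteq\mathbb{N}$ and weights $\mu(v)\colon L(v)\to[0,1]$, written $\mu(v,c)$; for a set $A$ of vertex–colour pairs, $|A|_\mu=\sum_{(v,c)\in A}\mu(v,c)$, and $|L(v)|_\mu=\sum_{c\in L(v)}\mu(v,c)$. An $(L,\sigma)$-colouring is $\gamma\colon V\to\mathbb{N}$ with $\gamma(v)\in L(v)$ for all $v$ such that $(v,\gamma(v))$ does not block $(u,\gamma(u))$ for all adjacent $u,v$. $N_{G,L,\sigma}(v,c)$ is the set of pairs $(w,c')$ with $w$ adjacent to $v$, $c'\in L(w)$, and $(w,c')$ blocking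 $(v,c)$. *)

theory Defs
  imports Complex_Main
begin

definition colours :: "nat set" where
  "colours = {c. 0 < c}"

definition hypergraph :: "'a set \<Rightarrow> 'a set set \<Rightarrow> bool" where
  "hypergraph V E \<longleftrightarrow> (\<forall>e\<in>E. e \<subseteq> V)"

definition k_uniform :: "nat \<Rightarrow> 'a set set \<Rightarrow> bool" where
  "k_uniform k E \<longleftrightarrow> (\<forall>e\<in>E. finite e \<and> card e = k)"

definition linear_hg :: "'a set set \<Rightarrow> bool" where
  "linear_hg E \<longleftrightarrow> (\<forall>e\<in>E. \<forall>f\<in>E. e \<noteq> f \<longrightarrow> finite (e \<inter> f) \<and> card (e \<inter> f) \<le> 1)"

definition adjacent :: "'a set set \<Rightarrow> 'a \<Rightarrow> 'a \<Rightarrow> bool" where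
  "adjacent E u v \<longleftrightarrow> u \<noteq> v \<and> (\<exists>e\<in>E. u \<in> e \<and> v \<in> e)"

definition vertex_correspondence :: "'a set set \<Rightarrow> ('a \<Rightarrow> 'a \<Rightarrow> nat \<Rightarrow> nat) \<Rightarrow> bool" where
  "vertex_correspondence E \<sigma> \<longleftrightarrow>
     (\<forall>u v. adjacent E u v \<longrightarrow>
        bij_betw (\<sigma> u v) colours colours \<and> (\<forall>c\<in>colours. \<sigma> v u (\<sigma> u v c) = c))"

definition blocks :: "('a \<Rightarrow> 'a \<Rightarrow> nat \<Rightarrow> nat) \<Rightarrow> 'a \<times> nat \<Rightarrow> 'a \<times> nat \<Rightarrow> bool" where
  "blocks \<sigma> uc vc' \<longleftrightarrow> \<sigma> (fst uc) (fst vc') (snd uc) = snd vc'"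

definition weighted_list_assignment ::
  "'a set \<Rightarrow> ('a \<Rightarrow> nat set) \<Rightarrow> ('a \<Rightarrow> nat \<Rightarrow> real) \<Rightarrow> bool" where
  "weighted_list_assignment V L \<mu> \<longleftrightarrow>
     (\<forall>v\<in>V. L v \<subseteq> colours \<and> (\<forall>c\<in>L v. 0 \<le> \<mu> v c \<and> \<mu> v c \<le> 1))"

definition wsize :: "('a \<Rightarrow> nat \<Rightarrow> real) \<Rightarrow> ('a \<times> nat) set \<Rightarrow> real" where
  "wsize \<mu> A = (\<Sum>(v,c)\<in>A. \<mu> v c)"

definition list_weight :: "('a \<Rightarrow> nat set) \<Rightarrow> ('a \<Rightarrow> nat \<Rightarrow> real) \<Rightarrow> 'a \<Rightarrow> real" where
  "list_weight L \<mu> v = (\<Sum>c\<in>L v. \<mu> v c)"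

definition nbhd :: "'a set set \<Rightarrow> ('a \<Rightarrow> nat set) \<Rightarrow> ('a \<Rightarrow> 'a \<Rightarrow> nat \<Rightarrow> nat)
                    \<Rightarrow> 'a \<Rightarrow> nat \<Rightarrow> ('a \<times> nat) set" where
  "nbhd E L \<sigma> v c = {(w, c'). adjacent E v w \<and> c' \<in> L w \<and> blocks \<sigma> (w, c') (v, c)}"

definition is_colouring :: "'a set \<Rightarrow> 'a set set \<Rightarrow> ('a \<Rightarrow> nat set)
                    \<Rightarrow> ('a \<Rightarrow> 'a \<Rightarrow> nat \<Rightarrow> nat) \<Rightarrow> ('a \<Rightarrow> nat) \<Rightarrow> bool" where
  "is_colouring V E L \<sigma> \<gamma> \<longleftrightarrow>
     (\<forall>v\<in>V. \<gamma> v \<in> L v) \<and>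
     (\<forall>u\<in>V. \<forall>v\<in>V. adjacent E u v \<longrightarrow> \<not> blocks \<sigma> (v, \<gamma> v) (u, \<gamma> u))"

end

theory Submission
  imports Defs "HOL-Library.FuncSet"
begin

locale dpc =
  fixes V :: "'a set" and E :: "'a set set" and \<sigma> :: "'a \<Rightarrow> 'a \<Rightarrow> nat \<Rightarrow> nat"
    and L :: "'a \<Rightarrow> nat set" and \<mu> :: "'a \<Rightarrow> nat \<Rightarrow> real" and l n :: real
  assumes finV: "finite V" and hg: "hypergraph V E"
    and vc: "vertex_correspondence E \<sigma>"
    and wla: "weighted_list_assignment V L \<mu>"
    and finL: "\<forall>v\<in>V. finite (L v)"
    and lpos: "l > 0" and npos: "n > 0" and ln: "4 * n \<le> l"
    and lw: "\<forall>v\<in>V. list_weight L \<mu> v \<ge> l"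
    and nb: "\<forall>v\<in>V. \<forall>c\<in>L v. wsize \<mu> (nbhd E L \<sigma> v c) \<le> n"
begin

definition proper :: "'a set \<Rightarrow> ('a \<Rightarrow> nat) \<Rightarrow> bool" where
  "proper S g \<longleftrightarrow> (\<forall>u\<in>S. \<forall>v\<in>S. adjacent E u v \<longrightarrow> \<sigma> v u (g v) \<noteq> g u)"

definition W :: "'a set \<Rightarrow> ('a \<Rightarrow> nat) \<Rightarrow> real" where
  "W S g = (\<Prod>v\<in>S. \<mu> v (g v))"

definition Z :: "'a set \<Rightarrow> real" where
  "Z S = (\<Sum>g\<in>Pi\<^sub>E S L. if proper S g then W S g else 0)"

lemma adjV: "adjacent E u v \<Longrightarrow> u \<in> V \<and> v \<in> V"
  using hg unfolding adjacent_def hypergraph_def by blast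

lemma adj_sym: "adjacent E u v \<Longrightarrow> adjacent E v u"
  unfolding adjacent_def by blast

lemma sig_sym:
  assumes "adjacent E u v" "a \<in> colours" "b \<in> colours"
  shows "(\<sigma> u v a = b) = (\<sigma> v u b = a)"
proof -
  have 1: "\<forall>c\<in>colours. \<sigma> v u (\<sigma> u v c) = c" "\<forall>c\<in>colours. \<sigma> u v (\<sigma> v u c) = c"
    using vc assms(1) adj_sym unfolding vertex_correspondence_def by blast+
  show ?thesis using 1 assms(2,3) by metis
qed

lemma Lcol: "v \<in> V \<Longrightarrow> L v \<subseteq> colours"
  using wla unfolding weighted_list_assignment_def by blast

lemma mu_nn: "v \<in> V \<Longrightarrow> c \<in> L v \<Longrightarrow> 0 \<le> \<mu> v c"
  using wla unfolding weighted_list_assignment_def by blast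

lemma finPiE: "S \<subseteq> V \<Longrightarrow> finite (Pi\<^sub>E S L)"
  using finV finL by (intro finite_PiE) (auto intro: finite_subset)

lemma W_nn: "S \<subseteq> V \<Longrightarrow> g \<in> Pi\<^sub>E S L \<Longrightarrow> 0 \<le> W S g"
  unfolding W_def by (intro prod_nonneg) (auto intro: mu_nn)

lemma Z_nn: "S \<subseteq> V \<Longrightarrow> 0 \<le> Z S"
  unfolding Z_def by (intro sum_nonneg) (auto intro: W_nn)

lemma Z_empty: "Z {} = 1"
  unfolding Z_def W_def proper_def by simp


definition good :: "'a set \<Rightarrow> 'a \<Rightarrow> ('a \<Rightarrow> nat) \<Rightarrow> nat \<Rightarrow> bool" where
  "good S v g c \<longleftrightarrow> (\<forall>w\<in>S. adjacent E v w \<longrightarrow> \<sigma> w v (g w) \<noteq> c)"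

lemma proper_ins:
  assumes "S \<subseteq> V" "v \<in> V" "v \<notin> S" "y \<in> L v" "g \<in> Pi\<^sub>E S L"
  shows "proper (insert v S) (g(v:=y)) \<longleftrightarrow> proper S g \<and> good S v g y"
proof -
  have gu: "g u \<in> colours" if "u \<in> S" for u
    using assms(1,5) that Lcol by blast
  have yc: "y \<in> colours" using assms(2,4) Lcol by blast
  have vv: "\<not> adjacent E v v" unfolding adjacent_def by simp
  have sw: "(\<sigma> v u y \<noteq> g u) = (\<sigma> u v (g u) \<noteq> y)" if "u \<in> S" "adjacent E u v" for u
    using sig_sym[OF that(2) gu[OF that(1)] yc] by auto
  have eq: "\<And>u. u \<in> S \<Longrightarrow> (g(v:=y)) u = g u" using assms(3) by auto
  show ?thesis
    unfolding proper_def good_def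
    using vv sw eq assms(3) adj_sym
    by (auto simp: fun_upd_def)
qed


lemma Z_insert:
  assumes "S \<subseteq> V" "v \<in> V" "v \<notin> S"
  shows "Z (insert v S) = (\<Sum>g\<in>Pi\<^sub>E S L. if proper S g then
            (\<Sum>c\<in>L v. if good S v g c then \<mu> v c * W S g else 0) else 0)"
proof -
  let ?F = "\<lambda>h. if proper (insert v S) h then W (insert v S) h else 0"
  have finS: "finite S" using assms(1) finV finite_subset by blast
  have Wi: "W (insert v S) (g(v:=y)) = \<mu> v y * W S g" for g y
  proof -
    have "W (insert v S) (g(v:=y)) = \<mu> v y * W S (g(v:=y))"
      unfolding W_def using finS assms(3) by simp
    also have "W S (g(v:=y)) = W S g"
      unfolding W_def using assms(3) by (intro prod.cong) auto
    finally show ?thesis .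
  qed
  have "Z (insert v S) = sum ?F ((\<lambda>(y, g). g(v := y)) ` (L v \<times> Pi\<^sub>E S L))"
    unfolding Z_def PiE_insert_eq ..
  also have "\<dots> = (\<Sum>(y,g)\<in>L v \<times> Pi\<^sub>E S L. ?F (g(v:=y)))"
    by (subst sum.reindex[OF inj_combinator[OF assms(3)]]) (simp add: case_prod_beta')
  also have "\<dots> = (\<Sum>(y,g)\<in>L v \<times> Pi\<^sub>E S L. if proper S g \<and> good S v g y then \<mu> v y * W S g else 0)"
    by (intro sum.cong refl) (auto simp: proper_ins[OF assms] Wi)
  also have "\<dots> = (\<Sum>y\<in>L v. \<Sum>g\<in>Pi\<^sub>E S L. if proper S g \<and> good S v g y then \<mu> v y * W S g else 0)"
    by (rule sum.cartesian_product[symmetric])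
  also have "\<dots> = (\<Sum>g\<in>Pi\<^sub>E S L. \<Sum>y\<in>L v. if proper S g \<and> good S v g y then \<mu> v y * W S g else 0)"
    by (rule sum.swap)
  also have "\<dots> = (\<Sum>g\<in>Pi\<^sub>E S L. if proper S g then
            (\<Sum>c\<in>L v. if good S v g c then \<mu> v c * W S g else 0) else 0)"
    by (intro sum.cong refl) auto
  finally show ?thesis .
qed


lemma fix_bound:
  assumes "S \<subseteq> V" "w \<in> S" "c' \<in> L w"
  shows "(\<Sum>g\<in>Pi\<^sub>E S L. if proper S g \<and> g w = c' then W S g else 0) \<le> \<mu> w c' * Z (S - {w})"
proof -
  define A where "A = {g\<in>Pi\<^sub>E S L. proper S g \<and> g w = c'}"
  define T where "T = S - {w}"
  have TV: "T \<subseteq> V" using assms(1) T_def by auto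
  have finS: "finite S" using assms(1) finV finite_subset by blast
  have finA: "finite A" unfolding A_def using finPiE[OF assms(1)] by simp
  have mnn: "0 \<le> \<mu> w c'" using mu_nn assms by blast
  have "(\<Sum>g\<in>Pi\<^sub>E S L. if proper S g \<and> g w = c' then W S g else 0) = sum (W S) A"
    unfolding A_def using finPiE[OF assms(1)] by (simp add: sum.inter_filter)
  also have "\<dots> = (\<Sum>g\<in>A. \<mu> w c' * W T (restrict g T))"
  proof (intro sum.cong refl)
    fix g assume "g \<in> A"
    hence gw: "g w = c'" unfolding A_def by simp
    have "W S g = \<mu> w (g w) * W T g"
      unfolding W_def T_def using finS assms(2) by (simp add: prod.remove)
    also have "W T g = W T (restrict g T)" unfolding W_def by (intro prod.cong) auto
    finally show "W S g = \<mu> w c' * W T (restrict g T)" using gw by simp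
  qed
  also have "\<dots> = \<mu> w c' * (\<Sum>g\<in>A. W T (restrict g T))" by (simp add: sum_distrib_left)
  also have "(\<Sum>g\<in>A. W T (restrict g T)) = sum (W T) ((\<lambda>g. restrict g T) ` A)"
  proof -
    have "inj_on (\<lambda>g. restrict g T) A"
    proof (rule inj_onI)
      fix g1 g2 assume g: "g1 \<in> A" "g2 \<in> A" "restrict g1 T = restrict g2 T"
      show "g1 = g2"
      proof
        fix x
        show "g1 x = g2 x"
        proof (cases "x \<in> T")
          case True then show ?thesis using g(3) by (metis restrict_apply')
        next
          case False
          then show ?thesis using g(1,2) unfolding A_def T_def
            by (cases "x = w") (auto simp: PiE_def extensional_def)
        qed
      qed
    qed
    then show ?thesis by (simp add: sum.reindex)
  qed
  also have "\<dots> \<le> sum (W T) {h\<in>Pi\<^sub>E T L. proper T h}"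
  proof (rule sum_mono2)
    show "finite {h\<in>Pi\<^sub>E T L. proper T h}" using finPiE[OF TV] by simp
    show "(\<lambda>g. restrict g T) ` A \<subseteq> {h\<in>Pi\<^sub>E T L. proper T h}"
      unfolding A_def T_def proper_def by (auto simp: PiE_def Pi_def)
    show "\<And>b. b \<in> {h\<in>Pi\<^sub>E T L. proper T h} - (\<lambda>g. restrict g T) ` A \<Longrightarrow> 0 \<le> W T b"
      using W_nn[OF TV] by blast
  qed
  also have "\<dots> = Z T"
    unfolding Z_def using finPiE[OF TV] by (simp add: sum.inter_filter)
  finally show ?thesis using mnn unfolding T_def by (simp add: mult_left_mono)
qed


lemma fin_nbhd: "v \<in> V \<Longrightarrow> finite (nbhd E L \<sigma> v c)"
proof -
  assume v: "v \<in> V"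
  have "nbhd E L \<sigma> v c \<subseteq> Sigma V L" unfolding nbhd_def using adjV by auto
  moreover have "finite (Sigma V L)" using finV finL by (intro finite_SigmaI) auto
  ultimately show ?thesis by (rule finite_subset)
qed

lemma main:
  "S \<subseteq> V \<Longrightarrow> v \<in> V \<Longrightarrow> v \<notin> S \<Longrightarrow> l / 2 * Z S \<le> Z (insert v S)"
proof (induction "card S" arbitrary: S v rule: less_induct)
  case less
  note SV = less.prems(1) and vV = less.prems(2) and vS = less.prems(3)
  have finS: "finite S" using SV finV finite_subset by blast
  have ZS: "0 \<le> Z S" using Z_nn SV by blast
  have Zrem: "Z (S - {w}) \<le> 2 / l * Z S" if "w \<in> S" for w
  proof -
    have "card (S - {w}) < card S" using finS that by (rule card_Diff1_less)
    moreover have "insert w (S - {w}) = S" using that by auto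
    ultimately have "l / 2 * Z (S - {w}) \<le> Z S"
      using less.hyps[of "S - {w}" w] SV that by auto
    then show ?thesis using lpos by (simp add: field_simps)
  qed
  define N where "N c = nbhd E L \<sigma> v c \<inter> (S \<times> UNIV)" for c
  have finN: "finite (N c)" for c unfolding N_def using fin_nbhd[OF vV] by simp
  define lv where "lv = list_weight L \<mu> v"
  have lvl: "l \<le> lv" using lw vV lv_def by simp
  have finLv: "finite (L v)" using finL vV by simp
  have finP: "finite (Pi\<^sub>E S L)" using finPiE[OF SV] .
  define Y where "Y = (\<Sum>g\<in>Pi\<^sub>E S L. \<Sum>c\<in>L v. \<Sum>p\<in>N c.
        if proper S g \<and> g (fst p) = snd p then \<mu> v c * W S g else 0)"
  have stepB: "\<mu> v c * W S g - (\<Sum>p\<in>N c. if g (fst p) = snd p then \<mu> v c * W S g else 0)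
      \<le> (if good S v g c then \<mu> v c * W S g else 0)"
    if g: "g \<in> Pi\<^sub>E S L" and c: "c \<in> L v" for g c
  proof -
    have t: "0 \<le> \<mu> v c * W S g" using mu_nn[OF vV c] W_nn[OF SV g] by simp
    have s: "0 \<le> (\<Sum>p\<in>N c. if g (fst p) = snd p then \<mu> v c * W S g else 0)"
      using t by (intro sum_nonneg) auto
    show ?thesis
    proof (cases "good S v g c")
      case True then show ?thesis using s by simp
    next
      case False
      then obtain w where w: "w \<in> S" "adjacent E v w" "\<sigma> w v (g w) = c"
        unfolding good_def by blast
      have "(w, g w) \<in> N c" unfolding N_def nbhd_def blocks_def
        using w g by (auto simp: PiE_def Pi_def)
      then have "\<mu> v c * W S g \<le> (\<Sum>p\<in>N c. if g (fst p) = snd p then \<mu> v c * W S g else 0)"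
      proof -
        have "(\<lambda>p. if g (fst p) = snd p then \<mu> v c * W S g else 0) (w, g w)
              \<le> (\<Sum>p\<in>N c. if g (fst p) = snd p then \<mu> v c * W S g else 0)"
          using finN t \<open>(w, g w) \<in> N c\<close> by (intro member_le_sum) auto
        then show ?thesis by simp
      qed
      then show ?thesis using False by simp
    qed
  qed
  have "Z S * lv - Y \<le> Z (insert v S)"
  proof -
    have "Z S * lv - Y = (\<Sum>g\<in>Pi\<^sub>E S L. if proper S g then
            (\<Sum>c\<in>L v. \<mu> v c * W S g - (\<Sum>p\<in>N c. if g (fst p) = snd p then \<mu> v c * W S g else 0)) else 0)"
      unfolding Z_def Y_def lv_def list_weight_def
      by (simp add: sum_distrib_left sum_distrib_right sum_subtractf[symmetric] if_distrib if_distribR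
            sum.If_cases mult.commute cong: if_cong)
    also have "\<dots> \<le> (\<Sum>g\<in>Pi\<^sub>E S L. if proper S g then
            (\<Sum>c\<in>L v. if good S v g c then \<mu> v c * W S g else 0) else 0)"
      by (intro sum_mono) (auto intro!: sum_mono stepB)
    also have "\<dots> = Z (insert v S)" using Z_insert[OF SV vV vS] by simp
    finally show ?thesis .
  qed
  moreover have "Y \<le> lv * (2 * n / l) * Z S"
  proof -
    define K where "K = 2 / l * Z S"
    have K0: "0 \<le> K" unfolding K_def using ZS lpos by simp
    have "Y = (\<Sum>c\<in>L v. \<Sum>p\<in>N c. \<Sum>g\<in>Pi\<^sub>E S L.
        if proper S g \<and> g (fst p) = snd p then \<mu> v c * W S g else 0)"
      unfolding Y_def by (subst sum.swap) (intro sum.cong refl sum.swap)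
    also have "\<dots> \<le> (\<Sum>c\<in>L v. \<Sum>p\<in>N c. \<mu> v c * (\<mu> (fst p) (snd p) * K))"
    proof (intro sum_mono)
      fix c p assume c: "c \<in> L v" and p: "p \<in> N c"
      have pS: "fst p \<in> S" and pL: "snd p \<in> L (fst p)"
        using p unfolding N_def nbhd_def by auto
      have "(\<Sum>g\<in>Pi\<^sub>E S L. if proper S g \<and> g (fst p) = snd p then \<mu> v c * W S g else 0)
          = \<mu> v c * (\<Sum>g\<in>Pi\<^sub>E S L. if proper S g \<and> g (fst p) = snd p then W S g else 0)"
        by (simp add: sum_distrib_left if_distrib cong: if_cong)
      also have "\<dots> \<le> \<mu> v c * (\<mu> (fst p) (snd p) * Z (S - {fst p}))"
        using fix_bound[OF SV pS pL] mu_nn[OF vV c] by (rule mult_left_mono)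
      also have "\<dots> \<le> \<mu> v c * (\<mu> (fst p) (snd p) * K)"
        unfolding K_def using Zrem[OF pS] mu_nn[OF vV c] mu_nn[OF _ pL] pS SV
        by (intro mult_left_mono) auto
      finally show "(\<Sum>g\<in>Pi\<^sub>E S L. if proper S g \<and> g (fst p) = snd p then \<mu> v c * W S g else 0)
          \<le> \<mu> v c * (\<mu> (fst p) (snd p) * K)" .
    qed
    also have "\<dots> \<le> (\<Sum>c\<in>L v. \<mu> v c * (n * K))"
    proof (intro sum_mono)
      fix c assume c: "c \<in> L v"
      have "(\<Sum>p\<in>N c. \<mu> (fst p) (snd p)) \<le> (\<Sum>p\<in>nbhd E L \<sigma> v c. \<mu> (fst p) (snd p))"
      proof (rule sum_mono2)
        show "finite (nbhd E L \<sigma> v c)" using fin_nbhd[OF vV] .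
        show "N c \<subseteq> nbhd E L \<sigma> v c" unfolding N_def by auto
        show "\<And>b. b \<in> nbhd E L \<sigma> v c - N c \<Longrightarrow> 0 \<le> \<mu> (fst b) (snd b)"
          unfolding nbhd_def using adjV mu_nn by auto
      qed
      also have "\<dots> \<le> n" using nb vV c unfolding wsize_def by (simp add: case_prod_beta')
      finally have "(\<Sum>p\<in>N c. \<mu> (fst p) (snd p)) * K \<le> n * K" using K0 by (rule mult_right_mono)
      then have "(\<Sum>p\<in>N c. \<mu> (fst p) (snd p) * K) \<le> n * K" by (simp add: sum_distrib_right)
      then show "(\<Sum>p\<in>N c. \<mu> v c * (\<mu> (fst p) (snd p) * K)) \<le> \<mu> v c * (n * K)"
        using mu_nn[OF vV c] by (simp add: sum_distrib_left[symmetric] mult_left_mono)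
    qed
    also have "\<dots> = lv * (2 * n / l) * Z S"
    proof -
      have "(\<Sum>c\<in>L v. \<mu> v c * (n * K)) = lv * (n * K)"
        unfolding lv_def list_weight_def by (simp add: sum_distrib_right)
      then show ?thesis unfolding K_def by simp
    qed
    finally show ?thesis .
  qed
  ultimately have "lv * Z S * (1 - 2 * n / l) \<le> Z (insert v S)"
    by (simp add: algebra_simps)
  moreover have "l / 2 * Z S \<le> lv * Z S * (1 - 2 * n / l)"
  proof -
    have "1/2 \<le> 1 - 2 * n / l" using ln lpos by (simp add: field_simps)
    then have "l * Z S * (1/2) \<le> lv * Z S * (1 - 2 * n / l)"
      using lvl ZS lpos by (intro mult_mono) auto
    then show ?thesis by simp
  qed
  ultimately show ?case by linarith
qed


lemma Z_pow: "S \<subseteq> V \<Longrightarrow> (l / 2) ^ card S \<le> Z S"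
proof -
  assume SV: "S \<subseteq> V"
  have "finite S" using SV finV finite_subset by blast
  then show ?thesis using SV
  proof (induction S rule: finite_induct)
    case empty then show ?case by (simp add: Z_empty)
  next
    case (insert x F)
    have "(l / 2) ^ card (insert x F) = l / 2 * (l / 2) ^ card F" using insert by simp
    also have "\<dots> \<le> l / 2 * Z F" using insert lpos by (intro mult_left_mono) auto
    also have "\<dots> \<le> Z (insert x F)" using main insert by auto
    finally show ?case .
  qed
qed

lemma exists_col: "\<exists>\<gamma>. is_colouring V E L \<sigma> \<gamma>"
proof -
  have "0 < (l / 2) ^ card V" using lpos by simp
  also have "\<dots> \<le> Z V" using Z_pow[of V] by simp
  finally have "0 < Z V" .
  have "\<exists>g\<in>Pi\<^sub>E V L. proper V g"
  proof (rule ccontr)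
    assume "\<not> ?thesis"
    then have "\<forall>g\<in>Pi\<^sub>E V L. (if proper V g then W V g else 0) = 0" by auto
    then have "Z V = 0" unfolding Z_def by (rule sum.neutral)
    then show False using \<open>0 < Z V\<close> by simp
  qed
  then obtain g where g: "g \<in> Pi\<^sub>E V L" "proper V g" by blast
  have "is_colouring V E L \<sigma> g"
    using g unfolding is_colouring_def proper_def blocks_def by (auto simp: PiE_def Pi_def)
  then show ?thesis by blast
qed

end

theorem lemma7p1:
  fixes V :: "'a set" and E :: "'a set set" and k :: nat
    and \<sigma> :: "'a \<Rightarrow> 'a \<Rightarrow> nat \<Rightarrow> nat"
    and L :: "'a \<Rightarrow> nat set" and \<mu> :: "'a \<Rightarrow> nat \<Rightarrow> real"
    and l n :: real
  assumes "finite V" and "hypergraph V E" and "k_uniform k E" and "linear_hg E"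
    and "vertex_correspondence E \<sigma>"
    and "weighted_list_assignment V L \<mu>"
    and "\<forall>v\<in>V. finite (L v)"
    and "l > 0" and "n > 0"
    and "l / n \<ge> 3 * exp 1"
    and "\<forall>v\<in>V. list_weight L \<mu> v \<ge> l"
    and "\<forall>v\<in>V. \<forall>c\<in>L v. wsize \<mu> (nbhd E L \<sigma> v c) \<le> n"
  shows "\<exists>\<gamma>. is_colouring V E L \<sigma> \<gamma>"
proof -
  have e2: "2 \<le> exp (1::real)" using exp_ge_add_one_self[of 1] by simp
  have "4 \<le> l / n" using assms(10) e2 by linarith
  then have ln: "4 * n \<le> l" using assms(9) by (simp add: field_simps)
  interpret dpc V E \<sigma> L \<mu> l n
    using assms ln by unfold_locales auto
  show ?thesis by (rule exists_col)
qed

end
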